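(* Let $A,B$ be invertible square complex matrices such that $ABA^{-1}B^{-1}-I$ has rank at most $1$. Then there is a basis in which $A$ and $B$ are both upper triangular. *)

theory Defs
  imports "Jordan_Normal_Form.DL_Rank"
begin

end

theory Submission
  imports Defs "Jordan_Normal_Form.Schur_Decomposition" "Jordan_Normal_Form.Spectral_Radius"
begin



lemma two_indpt:
  fixes d w :: "complex vec"
  assumes d: "d \<in> carrier_vec n" and w: "w \<in> carrier_vec n"
    and d0: "d \<noteq> 0\<^sub>v n" and nd: "\<not> (\<exists>c. w = c \<cdot>\<^sub>v d)"
  shows "module.lin_indpt class_ring (module_vec TYPE(complex) n) {d, w}"
proof
  interpret vec_space "TYPE(complex)" n .
  assume ld: "lin_dep {d, w}"
  have dw: "d \<noteq> w" using nd by (metis smult_carrier_vec one_smult_vec d)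
  from finite_lin_dep[of "{d,w}"] ld d w obtain a v where
    lc: "lincomb a {d, w} = 0\<^sub>v n" and v: "v \<in> {d,w}" "a v \<noteq> 0" by auto
  have comp: "a d * d $ i + a w * w $ i = 0" if "i < n" for i
  proof -
    have "lincomb a {d,w} $ i = 0" using lc that by simp
    thus ?thesis using lincomb_index[OF that, of "{d,w}" a] d w dw by simp
  qed
  show False
  proof (cases "a w = 0")
    case True
    with v have "a d \<noteq> 0" by auto
    with comp True have "d = 0\<^sub>v n" using d by (intro eq_vecI) auto
    with d0 show False by simp
  next
    case False
    have "w = (- a d / a w) \<cdot>\<^sub>v d"
    proof (rule eq_vecI)
      fix i assume "i < dim_vec ((- a d / a w) \<cdot>\<^sub>v d)"
      hence i: "i < n" using d by auto
      have "a w * w $ i = - (a d * d $ i)" using comp[OF i] by (simp add: add_eq_0_iff)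
      thus "w $ i = ((- a d / a w) \<cdot>\<^sub>v d) $ i" using i d False by (simp add: field_simps)
    qed (use d w in auto)
    with nd show False by blast
  qed
qed


lemma rank_le1_outer:
  fixes D :: "complex mat"
  assumes D: "D \<in> carrier_mat n n" and r: "vec_space.rank n D \<le> 1"
  shows "\<exists>u v. \<forall>i<n. \<forall>j<n. D $$ (i,j) = u i * v j"
proof (cases "\<forall>j<n. col D j = 0\<^sub>v n")
  case True
  show ?thesis
  proof (intro exI allI impI)
    fix i j assume "i < n" "j < n"
    with True have "col D j $ i = 0" by auto
    thus "D $$ (i,j) = 0 * 0" using D \<open>i<n\<close> \<open>j<n\<close> by auto
  qed
next
  case False
  then obtain j0 where j0: "j0 < n" and nz: "col D j0 \<noteq> 0\<^sub>v n" by auto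
  interpret vec_space "TYPE(complex)" n .
  have mult: "\<exists>c. col D j = c \<cdot>\<^sub>v col D j0" if j: "j < n" for j
  proof (rule ccontr)
    assume nd: "\<not> ?thesis"
    have ind: "lin_indpt {col D j0, col D j}"
      by (rule two_indpt[OF _ _ nz nd], insert D j j0, auto)
    have ne: "col D j0 \<noteq> col D j" using nd by (metis one_smult_vec)
    have sub: "{col D j0, col D j} \<subseteq> set (cols D)" using D j j0 by (auto simp: cols_def)
    from rank_ge_card_indpt[OF D sub ind] ne r show False by simp
  qed
  define c where "c j = (SOME c. col D j = c \<cdot>\<^sub>v col D j0)" for j
  show ?thesis
  proof (intro exI allI impI)
    fix i j assume i: "i < n" and j: "j < n"
    from someI_ex[OF mult[OF j]] have "col D j = c j \<cdot>\<^sub>v col D j0" unfolding c_def .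
    hence "col D j $ i = (c j \<cdot>\<^sub>v col D j0) $ i" by simp
    thus "D $$ (i,j) = col D j0 $ i * c j" using D i j j0 by auto
  qed
qed

definition crk1 :: "nat \<Rightarrow> 'a::comm_ring_1 mat \<Rightarrow> 'a mat \<Rightarrow> bool" where
  "crk1 n A B = (\<exists>u v. \<forall>i<n. \<forall>j<n. (A*B - B*A) $$ (i,j) = u i * v j)"

lemma outer_entries:
  assumes U: "U \<in> carrier_mat n 1" and V: "V \<in> carrier_mat 1 m" and i: "i < n" and j: "j < m"
  shows "(U * V) $$ (i,j) = U $$ (i,0) * V $$ (0,j)"
  using U V i j by (simp add: scalar_prod_def)

lemma outer_mat:
  fixes M :: "'a::comm_ring_1 mat"
  assumes M: "M \<in> carrier_mat n n" and e: "\<forall>i<n. \<forall>j<n. M $$ (i,j) = u i * v j"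
  shows "M = mat n 1 (\<lambda>(i,_). u i) * mat 1 n (\<lambda>(_,j). v j)"
  using M e by (intro eq_matI) (auto simp: scalar_prod_def)

lemma crk1_mat:
  fixes A B :: "'a::comm_ring_1 mat"
  assumes A: "A \<in> carrier_mat n n" and B: "B \<in> carrier_mat n n"
  shows "crk1 n A B \<longleftrightarrow> (\<exists>U V. U \<in> carrier_mat n 1 \<and> V \<in> carrier_mat 1 n \<and> A*B - B*A = U * V)"
proof
  assume "crk1 n A B"
  then obtain u v where e: "\<forall>i<n. \<forall>j<n. (A*B - B*A) $$ (i,j) = u i * v j" unfolding crk1_def by auto
  have "A*B - B*A \<in> carrier_mat n n" using A B by auto
  from outer_mat[OF this e] show "\<exists>U V. U \<in> carrier_mat n 1 \<and> V \<in> carrier_mat 1 n \<and> A*B - B*A = U * V"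
    by (intro exI[of _ "mat n 1 (\<lambda>(i,_). u i)"] exI[of _ "mat 1 n (\<lambda>(_,j). v j)"]) auto
next
  assume "\<exists>U V. U \<in> carrier_mat n 1 \<and> V \<in> carrier_mat 1 n \<and> A*B - B*A = U * V"
  then obtain U V where U: "U \<in> carrier_mat n 1" and V: "V \<in> carrier_mat 1 n" and e: "A*B - B*A = U * V" by auto
  show "crk1 n A B" unfolding crk1_def
    by (rule exI[of _ "\<lambda>i. U $$ (i,0)"], rule exI[of _ "\<lambda>j. V $$ (0,j)"], 
        auto simp: e outer_entries[OF U V])
qed

lemma cm_n: "X \<in> carrier_mat n n \<Longrightarrow> Y \<in> carrier_mat n n \<Longrightarrow> X * Y \<in> carrier_mat n n"
  by auto
lemma as_n: "X \<in> carrier_mat n n \<Longrightarrow> Y \<in> carrier_mat n n \<Longrightarrow> Z \<in> carrier_mat n n \<Longrightarrow> X * Y * Z = X * (Y * Z)"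
  by auto

lemma crk1_sim:
  fixes A B P Q :: "'a::comm_ring_1 mat"
  assumes A: "A \<in> carrier_mat n n" and B: "B \<in> carrier_mat n n"
    and P: "P \<in> carrier_mat n n" and Q: "Q \<in> carrier_mat n n" and PQ: "P * Q = 1\<^sub>m n"
    and c: "crk1 n A B"
  shows "crk1 n (Q * A * P) (Q * B * P)"
proof -
  from c[unfolded crk1_mat[OF A B]] obtain U V where U: "U \<in> carrier_mat n 1" and V: "V \<in> carrier_mat 1 n"
    and e: "A*B - B*A = U * V" by auto
  have PQX: "P * (Q * X) = X" if "X \<in> carrier_mat n n" for X
    using that P Q PQ by (metis assoc_mult_mat left_mult_one_mat)
  have 1: "Q * A * P * (Q * B * P) = Q * (A * B) * P"
  proof -
    have "Q * A * P * (Q * B * P) = Q * (A * (P * (Q * (B * P))))" using A B P Q by (simp add: cm_n[where n=n] as_n[where n=n])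
    also have "P * (Q * (B * P)) = B * P" using B P by (intro PQX) auto
    finally show ?thesis using A B P Q by (simp add: cm_n[where n=n] as_n[where n=n])
  qed
  have 2: "Q * B * P * (Q * A * P) = Q * (B * A) * P"
  proof -
    have "Q * B * P * (Q * A * P) = Q * (B * (P * (Q * (A * P))))" using A B P Q by (simp add: cm_n[where n=n] as_n[where n=n])
    also have "P * (Q * (A * P)) = A * P" using A P by (intro PQX) auto
    finally show ?thesis using A B P Q by (simp add: cm_n[where n=n] as_n[where n=n])
  qed
  have "Q * A * P * (Q * B * P) - Q * B * P * (Q * A * P) = Q * (A*B - B*A) * P"
    unfolding 1 2 using A B P Q
    by (subst mult_minus_distrib_mat[where nr=n and n=n and nc=n], auto simp: minus_mult_distrib_mat[where nr=n and n=n and nc=n])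
  also have "\<dots> = (Q * U) * (V * P)" unfolding e
  proof -
    have "Q * (U * V) * P = Q * (U * V * P)" by (rule assoc_mult_mat[OF Q _ P]) (use U V in auto)
    also have "U * V * P = U * (V * P)" by (rule assoc_mult_mat[OF U V P])
    also have "Q * (U * (V * P)) = Q * U * (V * P)" by (rule assoc_mult_mat[OF Q U, symmetric]) (use V P in auto)
    finally show "Q * (U * V) * P = Q * U * (V * P)" .
  qed
  finally have e2: "Q * A * P * (Q * B * P) - Q * B * P * (Q * A * P) = (Q * U) * (V * P)" .
  show ?thesis
  proof (rule crk1_mat[THEN iffD2])
    show "\<exists>U' V'. U' \<in> carrier_mat n 1 \<and> V' \<in> carrier_mat 1 n \<and> Q * A * P * (Q * B * P) - Q * B * P * (Q * A * P) = U' * V'"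
      by (rule exI[of _ "Q * U"], rule exI[of _ "V * P"], insert e2 Q U V P, auto)
  qed (use A B P Q in auto)
qed




lemma crk1_transpose:
  fixes A B :: "'a::comm_ring_1 mat"
  assumes A: "A \<in> carrier_mat n n" and B: "B \<in> carrier_mat n n" and c: "crk1 n A B"
  shows "crk1 n (transpose_mat A) (transpose_mat B)"
proof -
  from c obtain u v where e: "\<forall>i<n. \<forall>j<n. (A*B - B*A) $$ (i,j) = u i * v j" unfolding crk1_def by auto
  have "transpose_mat A * transpose_mat B = transpose_mat (B * A)" using transpose_mult[OF B A] by simp
  moreover have "transpose_mat B * transpose_mat A = transpose_mat (A * B)" using transpose_mult[OF A B] by simp
  ultimately have id: "transpose_mat A * transpose_mat B - transpose_mat B * transpose_mat A
     = transpose_mat (B * A) - transpose_mat (A * B)" by simp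
  show ?thesis unfolding crk1_def id
  proof (intro exI allI impI)
    fix i j assume i: "i < n" and j: "j < n"
    have "(A*B - B*A) $$ (j,i) = u j * v i" using e i j by auto
    thus "(transpose_mat (B * A) - transpose_mat (A * B)) $$ (i, j) = (- v i) * u j"
      using A B i j by (auto simp: algebra_simps)
  qed
qed

lemma tri_eigvec:
  fixes T :: "'a::field mat"
  assumes T: "T \<in> carrier_mat n n" and ut: "upper_triangular T"
    and S: "\<And>z c. z \<in> S \<Longrightarrow> T *\<^sub>v z - c \<cdot>\<^sub>v z \<in> S"
    and Sc: "S \<subseteq> carrier_vec n" and z0: "z0 \<in> S" "z0 \<noteq> 0\<^sub>v n"
  shows "\<exists>z\<in>S. z \<noteq> 0\<^sub>v n \<and> (\<exists>\<mu>. T *\<^sub>v z = \<mu> \<cdot>\<^sub>v z)"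
proof -
  have "\<forall>z\<in>S. z \<noteq> 0\<^sub>v n \<longrightarrow> (\<forall>i. k \<le> i \<longrightarrow> i < n \<longrightarrow> z $ i = 0) \<longrightarrow> (\<exists>z\<in>S. z \<noteq> 0\<^sub>v n \<and> (\<exists>\<mu>. T *\<^sub>v z = \<mu> \<cdot>\<^sub>v z))" for k
  proof (induction k)
    case 0
    show ?case
    proof (intro ballI impI)
      fix z assume z: "z \<in> S" "z \<noteq> 0\<^sub>v n" and zz: "\<forall>i. 0 \<le> i \<longrightarrow> i < n \<longrightarrow> z $ i = 0"
      have "z = 0\<^sub>v n" using Sc z zz by (intro eq_vecI) auto
      with z show "\<exists>z\<in>S. z \<noteq> 0\<^sub>v n \<and> (\<exists>\<mu>. T *\<^sub>v z = \<mu> \<cdot>\<^sub>v z)" by auto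
    qed
  next
    case (Suc k)
    show ?case
    proof (intro ballI impI)
      fix z assume zS: "z \<in> S" and z0: "z \<noteq> 0\<^sub>v n" and zz: "\<forall>i. Suc k \<le> i \<longrightarrow> i < n \<longrightarrow> z $ i = 0"
      have zc: "z \<in> carrier_vec n" using zS Sc by auto
      define c where "c = T $$ (k,k)"
      define w where "w = T *\<^sub>v z - c \<cdot>\<^sub>v z"
      have wS: "w \<in> S" unfolding w_def by (rule S[OF zS])
      have wc: "w \<in> carrier_vec n" using wS Sc by auto
      have Tz: "(T *\<^sub>v z) $ i = T $$ (i,i) * z $ i" if i: "i < n" "k \<le> i" for i
      proof -
        have "(T *\<^sub>v z) $ i = (\<Sum>j\<in>{0..<n}. T $$ (i,j) * z $ j)"
          using T zc i by (simp add: scalar_prod_def)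
        also have "\<dots> = T $$ (i,i) * z $ i + (\<Sum>j\<in>{0..<n} - {i}. T $$ (i,j) * z $ j)"
          by (rule sum.remove, insert i, auto)
        also have "(\<Sum>j\<in>{0..<n} - {i}. T $$ (i,j) * z $ j) = 0"
        proof (rule sum.neutral, intro ballI)
          fix j assume j: "j \<in> {0..<n} - {i}"
          show "T $$ (i,j) * z $ j = 0"
          proof (cases "j < i")
            case True
            with ut T i have "T $$ (i,j) = 0" unfolding upper_triangular_def by auto
            thus ?thesis by simp
          next
            case False
            with j i have "Suc k \<le> j" "j < n" by auto
            with zz have "z $ j = 0" by auto
            thus ?thesis by simp
          qed
        qed
        finally show ?thesis by simp
      qed
      show "\<exists>z\<in>S. z \<noteq> 0\<^sub>v n \<and> (\<exists>\<mu>. T *\<^sub>v z = \<mu> \<cdot>\<^sub>v z)"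
      proof (cases "w = 0\<^sub>v n")
        case True
        have "T *\<^sub>v z = c \<cdot>\<^sub>v z"
        proof (rule eq_vecI)
          fix i assume "i < dim_vec (c \<cdot>\<^sub>v z)"
          hence i: "i < n" using zc by auto
          have "w $ i = 0" using True i by simp
          thus "(T *\<^sub>v z) $ i = (c \<cdot>\<^sub>v z) $ i" unfolding w_def using i T zc by simp
        qed (use T zc in auto)
        with zS z0 show ?thesis by blast
      next
        case False
        have "\<forall>i. k \<le> i \<longrightarrow> i < n \<longrightarrow> w $ i = 0"
        proof (intro allI impI)
          fix i assume ki: "k \<le> i" and i: "i < n"
          have "w $ i = T $$ (i,i) * z $ i - c * z $ i" unfolding w_def using i T zc Tz[OF i ki] by simp
          also have "\<dots> = 0"
          proof (cases "i = k")
            case True thus ?thesis unfolding c_def by simp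
          next
            case False
            with ki zz i have "z $ i = 0" by auto
            thus ?thesis by simp
          qed
          finally show "w $ i = 0" .
        qed
        with Suc.IH wS False show ?thesis by blast
      qed
    qed
  qed
  from this[of n, rule_format, OF z0] show ?thesis by auto
qed




definition revJ :: "nat \<Rightarrow> 'a::semiring_1 mat" where
  "revJ n = mat n n (\<lambda>(i,j). if i + j = n - 1 then 1 else 0)"

lemma revJ_carrier[simp]: "revJ n \<in> carrier_mat n n" unfolding revJ_def by auto
lemma revJ_dim[simp]: "dim_row (revJ n) = n" "dim_col (revJ n) = n" unfolding revJ_def by auto

lemma revJ_left:
  fixes M :: "'a::semiring_1 mat"
  assumes M: "M \<in> carrier_mat n m" and i: "i < n" and j: "j < m"
  shows "(revJ n * M) $$ (i,j) = M $$ (n - 1 - i, j)"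
proof -
  have "(revJ n * M) $$ (i,j) = (\<Sum>k\<in>{0..<n}. (if i + k = n - 1 then 1 else 0) * M $$ (k,j))"
    using M i j by (simp add: revJ_def scalar_prod_def)
  also have "\<dots> = (if i + (n - 1 - i) = n - 1 then 1 else 0) * M $$ (n - 1 - i, j)
     + (\<Sum>k\<in>{0..<n} - {n - 1 - i}. (if i + k = n - 1 then 1 else 0) * M $$ (k,j))"
    by (rule sum.remove, insert i, auto)
  also have "(\<Sum>k\<in>{0..<n} - {n - 1 - i}. (if i + k = n - 1 then 1 else 0) * M $$ (k,j)) = 0"
    by (rule sum.neutral, insert i, auto)
  finally show ?thesis using i by simp
qed

lemma revJ_right:
  fixes M :: "'a::semiring_1 mat"
  assumes M: "M \<in> carrier_mat m n" and i: "i < m" and j: "j < n"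
  shows "(M * revJ n) $$ (i,j) = M $$ (i, n - 1 - j)"
proof -
  have "(M * revJ n) $$ (i,j) = (\<Sum>k\<in>{0..<n}. M $$ (i,k) * (if k + j = n - 1 then 1 else 0))"
    using M i j by (simp add: revJ_def scalar_prod_def)
  also have "\<dots> = M $$ (i, n - 1 - j) * (if (n - 1 - j) + j = n - 1 then 1 else 0)
     + (\<Sum>k\<in>{0..<n} - {n - 1 - j}. M $$ (i,k) * (if k + j = n - 1 then 1 else 0))"
    by (rule sum.remove, insert j, auto)
  also have "(\<Sum>k\<in>{0..<n} - {n - 1 - j}. M $$ (i,k) * (if k + j = n - 1 then 1 else 0)) = 0"
    by (rule sum.neutral, insert j, auto)
  finally show ?thesis using j by simp
qed

lemma revJ_revJ: "(revJ n :: 'a::semiring_1 mat) * revJ n = 1\<^sub>m n"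
proof (rule eq_matI)
  fix i j assume i: "i < dim_row (1\<^sub>m n :: 'a mat)" and j: "j < dim_col (1\<^sub>m n :: 'a mat)"
  hence i: "i < n" and j: "j < n" by auto
  show "(revJ n * revJ n) $$ (i,j) = (1\<^sub>m n :: 'a mat) $$ (i,j)"
    unfolding revJ_left[OF revJ_carrier i j] using i j by (auto simp: revJ_def)
qed auto

lemma revJ_upper:
  fixes L :: "'a::semiring_1 mat"
  assumes L: "L \<in> carrier_mat n n" and ut: "upper_triangular (transpose_mat L)"
  shows "upper_triangular (revJ n * L * revJ n)"
proof (rule upper_triangularI)
  fix i j assume j: "j < i" and i: "i < dim_row (revJ n * L * revJ n)"
  hence i: "i < n" using L by auto
  with j have jn: "j < n" by auto
  have "(revJ n * L * revJ n) $$ (i,j) = (revJ n * L) $$ (i, n - 1 - j)"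
    by (rule revJ_right[OF _ i jn], insert L, auto)
  also have "\<dots> = L $$ (n - 1 - i, n - 1 - j)"
    by (rule revJ_left[OF L i], insert jn, auto)
  also have "\<dots> = transpose_mat L $$ (n - 1 - j, n - 1 - i)" using L i jn by auto
  also have "\<dots> = 0" using ut L i j jn unfolding upper_triangular_def by auto
  finally show "(revJ n * L * revJ n) $$ (i,j) = 0" .
qed

definition utw :: "nat \<Rightarrow> 'a::semiring_1 mat \<Rightarrow> 'a mat \<Rightarrow> bool" where
  "utw n A B = (\<exists>P Q. P \<in> carrier_mat n n \<and> Q \<in> carrier_mat n n \<and>
           P * Q = 1\<^sub>m n \<and> Q * P = 1\<^sub>m n \<and>
           upper_triangular (Q * A * P) \<and> upper_triangular (Q * B * P))"

lemma transpose_conj: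
  fixes A P Q :: "'a::comm_ring_1 mat"
  assumes A: "A \<in> carrier_mat n n" and P: "P \<in> carrier_mat n n" and Q: "Q \<in> carrier_mat n n"
  shows "transpose_mat (Q * transpose_mat A * P) = transpose_mat P * A * transpose_mat Q"
proof -
  have "transpose_mat (Q * transpose_mat A * P) = transpose_mat P * transpose_mat (Q * transpose_mat A)"
    by (rule transpose_mult, insert A P Q, auto)
  also have "transpose_mat (Q * transpose_mat A) = A * transpose_mat Q"
    using transpose_mult[OF Q, of "transpose_mat A" n] A by simp
  finally show ?thesis using A P Q by (simp add: as_n[where n=n] cm_n[where n=n])
qed

lemma utw_transpose:
  fixes A B :: "'a::comm_ring_1 mat"
  assumes A: "A \<in> carrier_mat n n" and B: "B \<in> carrier_mat n n"
    and u: "utw n (transpose_mat A) (transpose_mat B)"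
  shows "utw n A B"
proof -
  from u obtain P Q where P: "P \<in> carrier_mat n n" and Q: "Q \<in> carrier_mat n n"
    and PQ: "P * Q = 1\<^sub>m n" and QP: "Q * P = 1\<^sub>m n"
    and uA: "upper_triangular (Q * transpose_mat A * P)" and uB: "upper_triangular (Q * transpose_mat B * P)"
    unfolding utw_def by auto
  define J where "J = (revJ n :: 'a mat)"
  have J: "J \<in> carrier_mat n n" unfolding J_def by simp
  have JJ: "J * J = 1\<^sub>m n" unfolding J_def by (rule revJ_revJ)
  define P0 where "P0 = transpose_mat Q * J"
  define Q0 where "Q0 = J * transpose_mat P"
  have P0: "P0 \<in> carrier_mat n n" and Q0: "Q0 \<in> carrier_mat n n" unfolding P0_def Q0_def using P Q J by auto
  have tPQ: "transpose_mat Q * transpose_mat P = 1\<^sub>m n"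
    using transpose_mult[OF P Q] PQ by simp
  have tQP: "transpose_mat P * transpose_mat Q = 1\<^sub>m n"
    using transpose_mult[OF Q P] QP by simp
  have "P0 * Q0 = transpose_mat Q * (J * J) * transpose_mat P"
    unfolding P0_def Q0_def using P Q J by (simp add: as_n[where n=n] cm_n[where n=n])
  also have "\<dots> = 1\<^sub>m n" unfolding JJ using tPQ P Q by simp
  finally have P0Q0: "P0 * Q0 = 1\<^sub>m n" .
  have "Q0 * P0 = J * (transpose_mat P * transpose_mat Q) * J"
    unfolding P0_def Q0_def using P Q J by (simp add: as_n[where n=n] cm_n[where n=n])
  also have "\<dots> = 1\<^sub>m n" unfolding tQP using JJ J by simp
  finally have Q0P0: "Q0 * P0 = 1\<^sub>m n" .
  have conj: "Q0 * X * P0 = J * transpose_mat (Q * transpose_mat X * P) * J" if X: "X \<in> carrier_mat n n" for X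
    unfolding transpose_conj[OF X P Q] P0_def Q0_def using X P Q J
    by (simp add: as_n[where n=n] cm_n[where n=n])
  have up: "upper_triangular (Q0 * X * P0)" if X: "X \<in> carrier_mat n n"
    and ut: "upper_triangular (Q * transpose_mat X * P)" for X
    unfolding conj[OF X] J_def
    by (rule revJ_upper, insert X P Q ut, auto)
  show ?thesis unfolding utw_def
    using P0 Q0 P0Q0 Q0P0 up[OF A uA] up[OF B uB] by blast
qed




lemma sim_wit_conj:
  fixes A C P Q :: "'a::semiring_1 mat"
  assumes A: "A \<in> carrier_mat n n" and s: "similar_mat_wit A C P Q"
  shows "Q * A * P = C" "P \<in> carrier_mat n n" "Q \<in> carrier_mat n n" "P * Q = 1\<^sub>m n" "Q * P = 1\<^sub>m n"
    "C \<in> carrier_mat n n"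
proof -
  from similar_mat_witD2[OF A s] have PQ: "P * Q = 1\<^sub>m n" and QP: "Q * P = 1\<^sub>m n" and e: "A = P * C * Q"
    and C: "C \<in> carrier_mat n n" and P: "P \<in> carrier_mat n n" and Q: "Q \<in> carrier_mat n n" by auto
  have "Q * A * P = (Q * P) * C * (Q * P)" unfolding e using P Q C by (simp add: as_n[where n=n] cm_n[where n=n])
  thus "Q * A * P = C" unfolding QP using C by simp
  show "P \<in> carrier_mat n n" "Q \<in> carrier_mat n n" "P * Q = 1\<^sub>m n" "Q * P = 1\<^sub>m n" "C \<in> carrier_mat n n" by fact+
qed

lemma block_entry:
  fixes X Y :: "'a::comm_ring_1 mat"
  assumes X: "X \<in> carrier_mat (Suc m) (Suc m)" and Y: "Y \<in> carrier_mat (Suc m) (Suc m)"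
    and X0: "X $$ (Suc i, 0) = 0" and i: "i < m" and j: "j < m"
  shows "(X * Y) $$ (Suc i, Suc j) = (\<Sum>k<m. X $$ (Suc i, Suc k) * Y $$ (Suc k, Suc j))"
proof -
  have "(X * Y) $$ (Suc i, Suc j) = (\<Sum>k<Suc m. X $$ (Suc i, k) * Y $$ (k, Suc j))"
    using X Y i j by (simp add: scalar_prod_def lessThan_atLeast0)
  also have "\<dots> = X $$ (Suc i, 0) * Y $$ (0, Suc j) + (\<Sum>k<m. X $$ (Suc i, Suc k) * Y $$ (Suc k, Suc j))"
    by (rule sum.lessThan_Suc_shift)
  finally show ?thesis using X0 by simp
qed

lemma right_step:
  fixes A B :: "complex mat" and m :: nat
  assumes A: "A \<in> carrier_mat (Suc m) (Suc m)" and B: "B \<in> carrier_mat (Suc m) (Suc m)"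
    and c: "crk1 (Suc m) A B"
    and v: "v \<in> carrier_vec (Suc m)" and v0: "v \<noteq> 0\<^sub>v (Suc m)"
    and Av: "A *\<^sub>v v = a \<cdot>\<^sub>v v" and Bv: "B *\<^sub>v v = b \<cdot>\<^sub>v v"
    and IH: "\<And>A B :: complex mat. A \<in> carrier_mat m m \<Longrightarrow> B \<in> carrier_mat m m \<Longrightarrow> crk1 m A B \<Longrightarrow> utw m A B"
  shows "utw (Suc m) A B"
proof -
  define n where "n = Suc m"
  have n: "n \<noteq> 0" and n1: "n - 1 = m" unfolding n_def by auto
  note A = A[folded n_def] and B = B[folded n_def] and v = v[folded n_def] and v0 = v0[folded n_def]
  note c = c[folded n_def]
  define bs where "bs = basis_completion v"
  define ws where "ws = gram_schmidt n bs"
  define W where "W = mat_of_cols n ws"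
  define W' where "W' = corthogonal_inv W"
  interpret cof_vec_space n "TYPE(complex)" .
  from basis_completion[OF v v0, folded bs_def]
  have span_b: "span (set bs) = carrier_vec n" and dist_b: "distinct bs" 
    and indep: "\<not> lin_dep (set bs)" and b: "set bs \<subseteq> carrier_vec n" and hdb: "hd bs = v" 
    and len_b: "length bs = n" by auto
  from hdb len_b n obtain vs where bv: "bs = v # vs" by (cases bs, auto)
  from gram_schmidt_result[OF b dist_b indep refl, folded ws_def]
  have ws: "set ws \<subseteq> carrier_vec n" "corthogonal ws" "length ws = n" 
    by (auto simp: len_b)
  from gram_schmidt_hd[OF v, of vs, folded bv] have hdws: "hd ws = v" unfolding ws_def .
  have orth_W: "corthogonal_mat W" using orthogonal_mat_of_cols ws unfolding W_def.
  have W: "W \<in> carrier_mat n n"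
    using ws unfolding W_def using mat_of_cols_carrier(1)[of n ws] by auto
  have W': "W' \<in> carrier_mat n n" unfolding W'_def corthogonal_inv_def using W 
    by (auto simp: mat_of_rows_def)  
  from corthogonal_inv_result[OF orth_W] 
  have W'W: "inverts_mat W' W" unfolding W'_def .
  hence WW': "inverts_mat W W'" using mat_mult_left_right_inverse[OF W' W] W' W
    unfolding inverts_mat_def by auto
  have W'W1: "W' * W = 1\<^sub>m n" and WW'1: "W * W' = 1\<^sub>m n"
    using W'W WW' W W' unfolding inverts_mat_def by auto
  have red: "\<exists>X1 X2 X3. split_block (W' * X * W) 1 1 = (X1, X2, 0\<^sub>m m 1, X3)
      \<and> X1 = mat 1 1 (\<lambda>_. e) \<and> X2 \<in> carrier_mat 1 m \<and> X3 \<in> carrier_mat m m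
      \<and> W' * X * W = four_block_mat X1 X2 (0\<^sub>m m 1) X3
      \<and> similar_mat_wit X (W' * X * W) W W'
      \<and> (\<forall>i<m. (W' * X * W) $$ (Suc i, 0) = 0)
      \<and> (\<forall>i<m. \<forall>j<m. X3 $$ (i,j) = (W' * X * W) $$ (Suc i, Suc j))"
    if X: "X \<in> carrier_mat n n" and Xv: "X *\<^sub>v v = e \<cdot>\<^sub>v v" for X e
  proof -
    define X' where "X' = W' * X * W"
    have X': "X' \<in> carrier_mat n n" unfolding X'_def using W W' X by auto
    obtain X1 X2 X0 X3 where splitX': "split_block X' 1 1 = (X1,X2,X0,X3)"
      by (cases "split_block X' 1 1", auto)
    have col0: "col X' 0 = vec n (\<lambda> i. if i = 0 then e else 0)"
      unfolding X'_def W'_def W_def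
      using corthogonal_col_ev_0[OF X v v0 Xv n hdws ws] .
    from X' n have "dim_row X' = 1 + m" "dim_col X' = 1 + m" unfolding n1[symmetric] by auto
    from split_block[OF splitX' this] have X2: "X2 \<in> carrier_mat 1 m"
      and X3: "X3 \<in> carrier_mat m m" and X'block: "X' = four_block_mat X1 X2 X0 X3" by auto
    have X1id: "X1 = mat 1 1 (\<lambda> _. e)"
      using splitX'[unfolded split_block_def Let_def] arg_cong[OF col0, of "\<lambda> v. v $ 0"] X' n
      by (auto simp: col_def)
    have X'0: "X' $$ (Suc i, 0) = 0" if "i < m" for i
      using arg_cong[OF col0, of "\<lambda> v. v $ Suc i"] X' that n1 by auto
    have X0id: "X0 = 0\<^sub>m m 1"
      using splitX'[unfolded split_block_def Let_def] X'0 X' n1 by auto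
    have X3e: "X3 $$ (i,j) = X' $$ (Suc i, Suc j)" if "i < m" "j < m" for i j
      using splitX'[unfolded split_block_def Let_def] that X' n1 by auto
    have WWX: "W * (W' * X) = X" using assoc_mult_mat[OF W W' X, symmetric] WW'1 X by simp
    have sim: "similar_mat_wit X X' W W'"
      by (rule similar_mat_witI[of _ _ n], insert WWX W W' X X' W'W1 WW'1, auto simp: X'_def as_n[where n=n] cm_n[where n=n])
    show ?thesis unfolding X'_def[symmetric]
      using splitX' X0id X1id X2 X3 X'block sim X'0 X3e by auto
  qed
  from red[OF A Av] obtain A1 A2 A3 where
    splA: "split_block (W' * A * W) 1 1 = (A1, A2, 0\<^sub>m m 1, A3)" and A1: "A1 = mat 1 1 (\<lambda>_. a)"
    and A2: "A2 \<in> carrier_mat 1 m" and A3: "A3 \<in> carrier_mat m m"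
    and Ablk: "W' * A * W = four_block_mat A1 A2 (0\<^sub>m m 1) A3"
    and simA: "similar_mat_wit A (W' * A * W) W W'"
    and A0: "\<forall>i<m. (W' * A * W) $$ (Suc i, 0) = 0"
    and A3e: "\<forall>i<m. \<forall>j<m. A3 $$ (i,j) = (W' * A * W) $$ (Suc i, Suc j)" by blast
  from red[OF B Bv] obtain B1 B2 B3 where
    splB: "split_block (W' * B * W) 1 1 = (B1, B2, 0\<^sub>m m 1, B3)" and B1: "B1 = mat 1 1 (\<lambda>_. b)"
    and B2: "B2 \<in> carrier_mat 1 m" and B3: "B3 \<in> carrier_mat m m"
    and Bblk: "W' * B * W = four_block_mat B1 B2 (0\<^sub>m m 1) B3"
    and simB: "similar_mat_wit B (W' * B * W) W W'"
    and B0: "\<forall>i<m. (W' * B * W) $$ (Suc i, 0) = 0"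
    and B3e: "\<forall>i<m. \<forall>j<m. B3 $$ (i,j) = (W' * B * W) $$ (Suc i, Suc j)" by blast
  define A' where "A' = W' * A * W"
  define B' where "B' = W' * B * W"
  have A': "A' \<in> carrier_mat (Suc m) (Suc m)" and B': "B' \<in> carrier_mat (Suc m) (Suc m)"
    unfolding A'_def B'_def using A B W W' n_def by auto
  have cAB': "crk1 n A' B'" unfolding A'_def B'_def by (rule crk1_sim[OF A B W W' WW'1 c])
  then obtain u w where uw: "\<forall>i<n. \<forall>j<n. (A' * B' - B' * A') $$ (i,j) = u i * w j"
    unfolding crk1_def by auto
  have c3: "crk1 m A3 B3" unfolding crk1_def
  proof (intro exI allI impI)
    fix i j assume i: "i < m" and j: "j < m"
    have "(A3 * B3) $$ (i,j) = (\<Sum>k<m. A3 $$ (i,k) * B3 $$ (k,j))"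
      using A3 B3 i j by (simp add: scalar_prod_def lessThan_atLeast0)
    also have "\<dots> = (A' * B') $$ (Suc i, Suc j)"
      by (subst block_entry[OF A' B' _ i j], insert A0 i j, auto simp: A'_def A3e B3e B'_def intro!: sum.cong)
    finally have 1: "(A3 * B3) $$ (i,j) = (A' * B') $$ (Suc i, Suc j)" .
    have "(B3 * A3) $$ (i,j) = (\<Sum>k<m. B3 $$ (i,k) * A3 $$ (k,j))"
      using A3 B3 i j by (simp add: scalar_prod_def lessThan_atLeast0)
    also have "\<dots> = (B' * A') $$ (Suc i, Suc j)"
      by (subst block_entry[OF B' A' _ i j], insert B0 i j, auto simp: A'_def A3e B3e B'_def intro!: sum.cong)
    finally have 2: "(B3 * A3) $$ (i,j) = (B' * A') $$ (Suc i, Suc j)" .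
    have "(A3 * B3 - B3 * A3) $$ (i,j) = (A' * B' - B' * A') $$ (Suc i, Suc j)"
      using 1 2 A3 B3 A' B' i j by simp
    also have "\<dots> = u (Suc i) * w (Suc j)" using uw i j n_def by auto
    finally show "(A3 * B3 - B3 * A3) $$ (i,j) = u (Suc i) * w (Suc j)" .
  qed
  have "utw m A3 B3" using IH[of A3 B3] A3 B3 c3 by blast
  then obtain P' Q' where P': "P' \<in> carrier_mat m m" and Q': "Q' \<in> carrier_mat m m"
    and PQ': "P' * Q' = 1\<^sub>m m" and QP': "Q' * P' = 1\<^sub>m m"
    and uA3: "upper_triangular (Q' * A3 * P')" and uB3: "upper_triangular (Q' * B3 * P')"
    unfolding utw_def by auto
  let ?P' = "four_block_mat (1\<^sub>m 1) (0\<^sub>m 1 m) (0\<^sub>m m 1) P'"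
  let ?Q' = "four_block_mat (1\<^sub>m 1) (0\<^sub>m 1 m) (0\<^sub>m m 1) Q'"
  have blk: "similar_mat_wit (four_block_mat X1 X2 (0\<^sub>m m 1) X3)
     (four_block_mat X1 (X2 * P') (0\<^sub>m m 1) (Q' * X3 * P')) ?P' ?Q'
     \<and> upper_triangular (four_block_mat X1 (X2 * P') (0\<^sub>m m 1) (Q' * X3 * P'))"
    if X1: "X1 = mat 1 1 (\<lambda>_. e)" and X2: "X2 \<in> carrier_mat 1 m" and X3: "X3 \<in> carrier_mat m m"
      and uX: "upper_triangular (Q' * X3 * P')" for X1 X2 X3 e
  proof
    have X1c: "X1 \<in> carrier_mat 1 1" unfolding X1 by auto
    have simX3: "similar_mat_wit X3 (Q' * X3 * P') P' Q'"
    proof (rule similar_mat_witI[OF PQ' QP' _ X3 _ P' Q'])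
      have "P' * (Q' * X3 * P') * Q' = (P' * Q') * X3 * (P' * Q')"
        using P' Q' X3 by (simp add: as_n[where n=m] cm_n[where n=m])
      thus "X3 = P' * (Q' * X3 * P') * Q'" unfolding PQ' using X3 by simp
    qed (use P' Q' X3 in auto)
    have X0_eq: "0\<^sub>m m 1 = P' * 0\<^sub>m m 1 * 1\<^sub>m 1" using P' by auto
    show "similar_mat_wit (four_block_mat X1 X2 (0\<^sub>m m 1) X3)
     (four_block_mat X1 (X2 * P') (0\<^sub>m m 1) (Q' * X3 * P')) ?P' ?Q'"
    proof (rule similar_mat_wit_four_block[OF similar_mat_wit_refl[OF X1c] simX3 _ X0_eq X1c X3])
      have "1\<^sub>m 1 * (X2 * P') * Q' = X2 * (P' * Q')" using X2 P' Q' by simp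
      thus "X2 = 1\<^sub>m 1 * (X2 * P') * Q'" unfolding PQ' using X2 by simp
    qed (use X2 P' in auto)
    have ut1: "upper_triangular X1" unfolding X1 by (auto simp: upper_triangular_def)
    show "upper_triangular (four_block_mat X1 (X2 * P') (0\<^sub>m m 1) (Q' * X3 * P'))"
      by (rule upper_triangular_four_block[OF X1c _ ut1 uX], insert Q' X3 P', auto)
  qed
  from blk[OF A1 A2 A3 uA3] Ablk simA
  obtain CA where sA: "similar_mat_wit A CA (W * ?P') (?Q' * W')" and uCA: "upper_triangular CA"
    using similar_mat_wit_trans by metis
  from blk[OF B1 B2 B3 uB3] Bblk simB
  obtain CB where sB: "similar_mat_wit B CB (W * ?P') (?Q' * W')" and uCB: "upper_triangular CB"
    using similar_mat_wit_trans by metis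
  note cA = sim_wit_conj[OF A sA] and cB = sim_wit_conj[OF B sB]
  show ?thesis unfolding utw_def n_def[symmetric]
    by (rule exI[of _ "W * ?P'"], rule exI[of _ "?Q' * W'"], insert cA cB uCA uCB, auto)
qed




lemma common_eig:
  fixes A B :: "complex mat"
  assumes A: "A \<in> carrier_mat n n" and B: "B \<in> carrier_mat n n"
    and x0: "x0 \<in> carrier_vec n" "x0 \<noteq> 0\<^sub>v n" "A *\<^sub>v x0 = l \<cdot>\<^sub>v x0"
    and inv: "\<And>x. x \<in> carrier_vec n \<Longrightarrow> A *\<^sub>v x = l \<cdot>\<^sub>v x \<Longrightarrow> A *\<^sub>v (B *\<^sub>v x) = l \<cdot>\<^sub>v (B *\<^sub>v x)"
  shows "\<exists>y \<mu>. y \<in> carrier_vec n \<and> y \<noteq> 0\<^sub>v n \<and> A *\<^sub>v y = l \<cdot>\<^sub>v y \<and> B *\<^sub>v y = \<mu> \<cdot>\<^sub>v y"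
proof -
  from char_poly_factorized[OF B] obtain es where cp: "char_poly B = (\<Prod>a\<leftarrow>es. [:- a, 1:])" by auto
  from schur_decomposition_exists[OF B cp] obtain T where T: "T \<in> carrier_mat n n"
    and ut: "upper_triangular T" and sim: "similar_mat B T" by auto
  from sim obtain P Q where sw: "similar_mat_wit B T P Q" unfolding similar_mat_def by auto
  from similar_mat_witD2[OF B sw] have PQ: "P * Q = 1\<^sub>m n" and QP: "Q * P = 1\<^sub>m n"
    and BPTQ: "B = P * T * Q" and P: "P \<in> carrier_mat n n" and Q: "Q \<in> carrier_mat n n" by auto
  have BP: "B *\<^sub>v (P *\<^sub>v z) = P *\<^sub>v (T *\<^sub>v z)" if z: "z \<in> carrier_vec n" for z
  proof -
    have w: "P *\<^sub>v z \<in> carrier_vec n" using P z by auto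
    have "B *\<^sub>v (P *\<^sub>v z) = (P * T) *\<^sub>v (Q *\<^sub>v (P *\<^sub>v z))" unfolding BPTQ
      by (rule assoc_mult_mat_vec, insert P T Q w, auto)
    also have "\<dots> = P *\<^sub>v (T *\<^sub>v (Q *\<^sub>v (P *\<^sub>v z)))"
      by (rule assoc_mult_mat_vec, insert P T Q w, auto)
    also have "Q *\<^sub>v (P *\<^sub>v z) = z" using assoc_mult_mat_vec[OF Q P z, symmetric] QP z by simp
    finally show ?thesis .
  qed
  define S where "S = {z \<in> carrier_vec n. A *\<^sub>v (P *\<^sub>v z) = l \<cdot>\<^sub>v (P *\<^sub>v z)}"
  have Sc: "S \<subseteq> carrier_vec n" unfolding S_def by auto
  have Scl: "T *\<^sub>v z - c \<cdot>\<^sub>v z \<in> S" if zS: "z \<in> S" for z c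
  proof -
    from zS have z: "z \<in> carrier_vec n" and Ay: "A *\<^sub>v (P *\<^sub>v z) = l \<cdot>\<^sub>v (P *\<^sub>v z)" unfolding S_def by auto
    define y where "y = P *\<^sub>v z"
    have y: "y \<in> carrier_vec n" unfolding y_def using P z by auto
    have Ay: "A *\<^sub>v y = l \<cdot>\<^sub>v y" using Ay unfolding y_def .
    have By: "B *\<^sub>v y \<in> carrier_vec n" using B y by auto
    have ABy: "A *\<^sub>v (B *\<^sub>v y) = l \<cdot>\<^sub>v (B *\<^sub>v y)" by (rule inv[OF y Ay])
    have "P *\<^sub>v (T *\<^sub>v z - c \<cdot>\<^sub>v z) = P *\<^sub>v (T *\<^sub>v z) - P *\<^sub>v (c \<cdot>\<^sub>v z)"
      by (rule mult_minus_distrib_mat_vec[OF P], insert T z, auto)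
    also have "P *\<^sub>v (c \<cdot>\<^sub>v z) = c \<cdot>\<^sub>v y" unfolding y_def by (rule mult_mat_vec[OF P z])
    also have "P *\<^sub>v (T *\<^sub>v z) = B *\<^sub>v y" unfolding y_def using BP[OF z] by simp
    finally have eq: "P *\<^sub>v (T *\<^sub>v z - c \<cdot>\<^sub>v z) = B *\<^sub>v y - c \<cdot>\<^sub>v y" .
    have "A *\<^sub>v (B *\<^sub>v y - c \<cdot>\<^sub>v y) = A *\<^sub>v (B *\<^sub>v y) - A *\<^sub>v (c \<cdot>\<^sub>v y)"
      by (rule mult_minus_distrib_mat_vec[OF A By], insert y, auto)
    also have "A *\<^sub>v (c \<cdot>\<^sub>v y) = c \<cdot>\<^sub>v (l \<cdot>\<^sub>v y)" unfolding mult_mat_vec[OF A y] Ay ..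
    also have "A *\<^sub>v (B *\<^sub>v y) - c \<cdot>\<^sub>v (l \<cdot>\<^sub>v y) = l \<cdot>\<^sub>v (B *\<^sub>v y - c \<cdot>\<^sub>v y)"
      unfolding ABy by (rule eq_vecI, insert By y B, auto simp: algebra_simps)
    finally have "A *\<^sub>v (B *\<^sub>v y - c \<cdot>\<^sub>v y) = l \<cdot>\<^sub>v (B *\<^sub>v y - c \<cdot>\<^sub>v y)" .
    thus ?thesis unfolding S_def using eq T z by auto
  qed
  define z0 where "z0 = Q *\<^sub>v x0"
  have Pz0: "P *\<^sub>v z0 = x0" unfolding z0_def using assoc_mult_mat_vec[OF P Q x0(1), symmetric] PQ x0(1) by simp
  have z0S: "z0 \<in> S" unfolding S_def using Pz0 x0 Q z0_def by auto
  have z00: "z0 \<noteq> 0\<^sub>v n"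
  proof
    assume "z0 = 0\<^sub>v n"
    hence "P *\<^sub>v z0 = 0\<^sub>v n" using P by auto
    with Pz0 x0 show False by simp
  qed
  from tri_eigvec[OF T ut Scl Sc z0S z00] obtain z \<mu> where zS: "z \<in> S" and z0: "z \<noteq> 0\<^sub>v n"
    and Tz: "T *\<^sub>v z = \<mu> \<cdot>\<^sub>v z" by auto
  from zS have z: "z \<in> carrier_vec n" and Ay: "A *\<^sub>v (P *\<^sub>v z) = l \<cdot>\<^sub>v (P *\<^sub>v z)" unfolding S_def by auto
  define y where "y = P *\<^sub>v z"
  have y: "y \<in> carrier_vec n" unfolding y_def using P z by auto
  have "Q *\<^sub>v y = z" unfolding y_def using assoc_mult_mat_vec[OF Q P z, symmetric] QP z by simp
  hence y0: "y \<noteq> 0\<^sub>v n" using z0 Q by auto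
  have "B *\<^sub>v y = \<mu> \<cdot>\<^sub>v y" unfolding y_def BP[OF z] Tz by (rule mult_mat_vec[OF P z])
  with y y0 Ay show ?thesis unfolding y_def by blast
qed




lemma case2_inv:
  fixes A B :: "complex mat"
  assumes A: "A \<in> carrier_mat n n" and B: "B \<in> carrier_mat n n" and c: "crk1 n A B"
    and x: "x \<in> carrier_vec n" and Ax: "A *\<^sub>v x = l \<cdot>\<^sub>v x"
    and nB: "A *\<^sub>v (B *\<^sub>v x) \<noteq> l \<cdot>\<^sub>v (B *\<^sub>v x)"
    and y: "y \<in> carrier_vec n" and Ay: "transpose_mat A *\<^sub>v y = l \<cdot>\<^sub>v y"
  shows "transpose_mat A *\<^sub>v (transpose_mat B *\<^sub>v y) = l \<cdot>\<^sub>v (transpose_mat B *\<^sub>v y)"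
proof -
  from c obtain u w where uw: "\<forall>i<n. \<forall>j<n. (A*B - B*A) $$ (i,j) = u i * w j" unfolding crk1_def by auto
  define C where "C = A * B - B * A"
  have C: "C \<in> carrier_mat n n" unfolding C_def using A B by auto
  define uu where "uu = vec n u"
  define ww where "ww = vec n w"
  have uu: "uu \<in> carrier_vec n" and ww: "ww \<in> carrier_vec n" unfolding uu_def ww_def by auto
  have Cx: "C *\<^sub>v x' = (ww \<bullet> x') \<cdot>\<^sub>v uu" if x': "x' \<in> carrier_vec n" for x'
  proof (rule eq_vecI)
    fix i assume "i < dim_vec ((ww \<bullet> x') \<cdot>\<^sub>v uu)"
    hence i: "i < n" using uu by auto
    have "(C *\<^sub>v x') $ i = (\<Sum>j\<in>{0..<n}. C $$ (i,j) * x' $ j)" using C x' i by (simp add: scalar_prod_def)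
    also have "\<dots> = (\<Sum>j\<in>{0..<n}. u i * (w j * x' $ j))" using uw i unfolding C_def
      by (intro sum.cong, auto)
    also have "\<dots> = u i * (ww \<bullet> x')" unfolding ww_def scalar_prod_def using x'
      by (simp add: sum_distrib_left)
    finally show "(C *\<^sub>v x') $ i = ((ww \<bullet> x') \<cdot>\<^sub>v uu) $ i" using i uu_def by simp
  qed (use C uu in auto)
  have CTy: "transpose_mat C *\<^sub>v y' = (uu \<bullet> y') \<cdot>\<^sub>v ww" if y': "y' \<in> carrier_vec n" for y'
  proof (rule eq_vecI)
    fix j assume "j < dim_vec ((uu \<bullet> y') \<cdot>\<^sub>v ww)"
    hence j: "j < n" using ww by auto
    have "(transpose_mat C *\<^sub>v y') $ j = (\<Sum>i\<in>{0..<n}. C $$ (i,j) * y' $ i)" using C y' j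
      by (simp add: scalar_prod_def)
    also have "\<dots> = (\<Sum>i\<in>{0..<n}. w j * (u i * y' $ i))" using uw j unfolding C_def
      by (intro sum.cong, auto)
    also have "\<dots> = w j * (uu \<bullet> y')" unfolding uu_def scalar_prod_def using y'
      by (simp add: sum_distrib_left)
    finally show "(transpose_mat C *\<^sub>v y') $ j = ((uu \<bullet> y') \<cdot>\<^sub>v ww) $ j" using j ww_def by simp
  qed (use C ww in auto)
  define z where "z = B *\<^sub>v x"
  have z: "z \<in> carrier_vec n" unfolding z_def using B x by auto
  have Az: "A *\<^sub>v z \<in> carrier_vec n" using A z by auto
  have "C *\<^sub>v x = (A * B) *\<^sub>v x - (B * A) *\<^sub>v x" unfolding C_def
    by (rule minus_mult_distrib_mat_vec, insert A B x, auto)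
  also have "(A * B) *\<^sub>v x = A *\<^sub>v z" unfolding z_def using A B x by simp
  also have "(B * A) *\<^sub>v x = B *\<^sub>v (l \<cdot>\<^sub>v x)" using A B x Ax by simp
  also have "\<dots> = l \<cdot>\<^sub>v z" unfolding z_def by (rule mult_mat_vec[OF B x])
  finally have Cxe: "C *\<^sub>v x = A *\<^sub>v z - l \<cdot>\<^sub>v z" .
  define k where "k = ww \<bullet> x"
  have d: "A *\<^sub>v z - l \<cdot>\<^sub>v z = k \<cdot>\<^sub>v uu" using Cxe Cx[OF x] unfolding k_def by simp
  have k0: "k \<noteq> 0"
  proof
    assume "k = 0"
    hence e0: "A *\<^sub>v z - l \<cdot>\<^sub>v z = 0\<^sub>v n" using d uu by auto
    have "A *\<^sub>v z = l \<cdot>\<^sub>v z"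
    proof (rule eq_vecI)
      fix i assume "i < dim_vec (l \<cdot>\<^sub>v z)"
      hence i: "i < n" using z by auto
      have "(A *\<^sub>v z - l \<cdot>\<^sub>v z) $ i = 0" unfolding e0 using i by simp
      thus "(A *\<^sub>v z) $ i = (l \<cdot>\<^sub>v z) $ i" using i Az z by simp
    qed (use A z in auto)
    with nB show False unfolding z_def by simp
  qed
  have "k * (uu \<bullet> y) = (k \<cdot>\<^sub>v uu) \<bullet> y" using uu y by simp
  also have "\<dots> = (A *\<^sub>v z) \<bullet> y - (l \<cdot>\<^sub>v z) \<bullet> y" unfolding d[symmetric]
    by (rule minus_scalar_prod_distrib, insert Az z y, auto)
  also have "(A *\<^sub>v z) \<bullet> y = (transpose_mat A *\<^sub>v y) \<bullet> z"
    using transpose_vec_mult_scalar[OF A z y] comm_scalar_prod[OF Az y] by simp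
  also have "\<dots> = l * (y \<bullet> z)" unfolding Ay using y z by simp
  also have "(l \<cdot>\<^sub>v z) \<bullet> y = l * (y \<bullet> z)" using y z comm_scalar_prod[OF z y] by simp
  finally have "k * (uu \<bullet> y) = 0" by simp
  with k0 have uy: "uu \<bullet> y = 0" by simp
  have CT0: "transpose_mat C *\<^sub>v y = 0\<^sub>v n" unfolding CTy[OF y] uy using ww by auto
  have BAT: "transpose_mat (B * A) = transpose_mat B * transpose_mat A - transpose_mat C"
  proof -
    have "transpose_mat B * transpose_mat A = transpose_mat (A * B)" using transpose_mult[OF A B] by simp
    moreover have "transpose_mat (B * A) = transpose_mat (A * B) - transpose_mat C"
      unfolding C_def by (rule eq_matI, insert A B, auto)
    ultimately show ?thesis by simp
  qed
  have "transpose_mat A *\<^sub>v (transpose_mat B *\<^sub>v y) = (transpose_mat A * transpose_mat B) *\<^sub>v y"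
    by (rule assoc_mult_mat_vec[symmetric], insert A B y, auto)
  also have "transpose_mat A * transpose_mat B = transpose_mat (B * A)" using transpose_mult[OF B A] by simp
  also have "\<dots> *\<^sub>v y = (transpose_mat B * transpose_mat A) *\<^sub>v y - transpose_mat C *\<^sub>v y"
    unfolding BAT by (rule minus_mult_distrib_mat_vec, insert A B C y, auto)
  also have "(transpose_mat B * transpose_mat A) *\<^sub>v y = transpose_mat B *\<^sub>v (l \<cdot>\<^sub>v y)"
    using A B y Ay by simp
  also have "\<dots> = l \<cdot>\<^sub>v (transpose_mat B *\<^sub>v y)" by (rule mult_mat_vec, insert B y, auto)
  finally show ?thesis unfolding CT0 using B y by simp
qed




lemma main_ind: "\<forall>A B :: complex mat. A \<in> carrier_mat n n \<longrightarrow> B \<in> carrier_mat n n \<longrightarrow> crk1 n A B \<longrightarrow> utw n A B"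
proof (induction n)
  case 0
  show ?case
  proof (intro allI impI)
    fix A B :: "complex mat" assume "A \<in> carrier_mat 0 0" "B \<in> carrier_mat 0 0"
    thus "utw 0 A B" unfolding utw_def
      by (intro exI[of _ "1\<^sub>m 0"]) (auto simp: upper_triangular_def)
  qed
next
  case (Suc m)
  have IH: "utw m A B" if "A \<in> carrier_mat m m" "B \<in> carrier_mat m m" "crk1 m A B" for A B :: "complex mat"
    using Suc.IH that by blast
  show ?case
  proof (intro allI impI)
    fix A B :: "complex mat"
    assume A: "A \<in> carrier_mat (Suc m) (Suc m)" and B: "B \<in> carrier_mat (Suc m) (Suc m)"
      and c: "crk1 (Suc m) A B"
    from spectrum_non_empty[OF A] obtain l where "eigenvalue A l" unfolding spectrum_def by auto
    then obtain x0 where "eigenvector A x0 l" unfolding eigenvalue_def by auto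
    hence x0: "x0 \<in> carrier_vec (Suc m)" "x0 \<noteq> 0\<^sub>v (Suc m)" "A *\<^sub>v x0 = l \<cdot>\<^sub>v x0"
      unfolding eigenvector_def using A by auto
    show "utw (Suc m) A B"
    proof (cases "\<forall>x. x \<in> carrier_vec (Suc m) \<longrightarrow> A *\<^sub>v x = l \<cdot>\<^sub>v x \<longrightarrow> A *\<^sub>v (B *\<^sub>v x) = l \<cdot>\<^sub>v (B *\<^sub>v x)")
      case True
      from common_eig[OF A B x0] True obtain y \<mu> where y: "y \<in> carrier_vec (Suc m)" "y \<noteq> 0\<^sub>v (Suc m)"
        "A *\<^sub>v y = l \<cdot>\<^sub>v y" "B *\<^sub>v y = \<mu> \<cdot>\<^sub>v y" by blast
      show ?thesis by (rule right_step[OF A B c y IH])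
    next
      case False
      then obtain x where x: "x \<in> carrier_vec (Suc m)" "A *\<^sub>v x = l \<cdot>\<^sub>v x"
        and nB: "A *\<^sub>v (B *\<^sub>v x) \<noteq> l \<cdot>\<^sub>v (B *\<^sub>v x)" by blast
      have AT: "transpose_mat A \<in> carrier_mat (Suc m) (Suc m)" and BT: "transpose_mat B \<in> carrier_mat (Suc m) (Suc m)"
        using A B by auto
      have "eigenvalue (transpose_mat A) l"
        using \<open>eigenvalue A l\<close> unfolding eigenvalue_root_char_poly[OF A] eigenvalue_root_char_poly[OF AT]
        char_poly_transpose_mat[OF A] .
      then obtain x1 where "eigenvector (transpose_mat A) x1 l" unfolding eigenvalue_def by auto
      hence x1: "x1 \<in> carrier_vec (Suc m)" "x1 \<noteq> 0\<^sub>v (Suc m)" "transpose_mat A *\<^sub>v x1 = l \<cdot>\<^sub>v x1"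
        unfolding eigenvector_def using AT by auto
      have inv: "transpose_mat A *\<^sub>v (transpose_mat B *\<^sub>v y) = l \<cdot>\<^sub>v (transpose_mat B *\<^sub>v y)"
        if "y \<in> carrier_vec (Suc m)" "transpose_mat A *\<^sub>v y = l \<cdot>\<^sub>v y" for y
        by (rule case2_inv[OF A B c x nB that])
      from common_eig[OF AT BT x1 inv] obtain y \<mu> where y: "y \<in> carrier_vec (Suc m)" "y \<noteq> 0\<^sub>v (Suc m)"
        "transpose_mat A *\<^sub>v y = l \<cdot>\<^sub>v y" "transpose_mat B *\<^sub>v y = \<mu> \<cdot>\<^sub>v y" by blast
      have "utw (Suc m) (transpose_mat A) (transpose_mat B)"
        by (rule right_step[OF AT BT crk1_transpose[OF A B c] y IH])
      thus ?thesis by (rule utw_transpose[OF A B])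
    qed
  qed
qed

theorem corollary3p3:
  fixes A B Ainv Binv :: "complex mat" and n :: nat
  assumes "A \<in> carrier_mat n n" and "B \<in> carrier_mat n n"
    and "Ainv \<in> carrier_mat n n" and "Binv \<in> carrier_mat n n"
    and "A * Ainv = 1\<^sub>m n" and "Ainv * A = 1\<^sub>m n"
    and "B * Binv = 1\<^sub>m n" and "Binv * B = 1\<^sub>m n"
    and "vec_space.rank n (A * B * Ainv * Binv - 1\<^sub>m n) \<le> 1"
  shows "\<exists>P Q. P \<in> carrier_mat n n \<and> Q \<in> carrier_mat n n \<and>
           P * Q = 1\<^sub>m n \<and> Q * P = 1\<^sub>m n \<and>
           upper_triangular (Q * A * P) \<and> upper_triangular (Q * B * P)"
proof -
  note A = assms(1) and B = assms(2) and Ai = assms(3) and Bi = assms(4)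
  note AiA = assms(6) and BiB = assms(8)
  define D where "D = A * B * Ainv * Binv - 1\<^sub>m n"
  have D: "D \<in> carrier_mat n n" unfolding D_def using A B Ai Bi by auto
  from rank_le1_outer[OF D assms(9)[folded D_def]] obtain d e where
    de: "\<forall>i<n. \<forall>j<n. D $$ (i,j) = d i * e j" by auto
  define U where "U = mat n 1 (\<lambda>(i,_). d i)"
  define V where "V = mat 1 n (\<lambda>(_,j). e j)"
  have U: "U \<in> carrier_mat n 1" and V: "V \<in> carrier_mat 1 n" unfolding U_def V_def by auto
  have DUV: "D = U * V" unfolding U_def V_def by (rule outer_mat[OF D de])
  have BiBX: "Binv * (B * X) = X" if "X \<in> carrier_mat n n" for X
    using assoc_mult_mat[OF Bi B that, symmetric] BiB that by simp
  have "D * (B * A) = A * B * Ainv * Binv * (B * A) - 1\<^sub>m n * (B * A)" unfolding D_def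
    by (rule minus_mult_distrib_mat, insert A B Ai Bi, auto)
  also have "A * B * Ainv * Binv * (B * A) = A * (B * (Ainv * (Binv * (B * A))))"
    using A B Ai Bi by (simp add: as_n[where n=n] cm_n[where n=n])
  also have "Binv * (B * A) = A" by (rule BiBX[OF A])
  also have "A * (B * (Ainv * A)) = A * B" unfolding AiA using A B by simp
  finally have "U * V * (B * A) = A * B - B * A" unfolding DUV using A B by simp
  moreover have "U * V * (B * A) = U * (V * (B * A))" by (rule assoc_mult_mat[OF U V], insert A B, auto)
  ultimately have comm: "A * B - B * A = U * (V * (B * A))" by simp
  have "crk1 n A B"
    by (rule crk1_mat[OF A B, THEN iffD2], rule exI[of _ U], rule exI[of _ "V * (B * A)"],
        insert comm U V A B, auto)
  with main_ind[of n] A B show ?thesis unfolding utw_def by blast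
qed


end
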